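(* Every pseudocompact space $X$ is $\sigma^*_{C(X)}$-$\alpha$-favorable.
   Context: A space is pseudocompact if it is Tychonoff and every real continuous function on it is bounded. $C(X)$ is the set of real continuous functions on $X$. The game $\mathcal J^*_{C(X)}$ on $X$: players $\beta$ and $\alpha$ alternately choose nonempty open sets $V_0\supseteq U_0\supseteq V_1\supseteq U_1\supseteq\cdots$ of $X$, $\beta$ choosing the $V_n$ (starting with $V_0$) and $\alpha$ the $U_n$. $\alpha$ wins the play iff for every sequence $(a_n)$ with $a_n\in U_n$ and every $g\in C(X)$ there is $t\in\bigcap_nU_n$ with $g(t)\in\overline{\{g(a_n):n\in\mathbb N\}}$. $X$ is $\sigma^*_{C(X)}$-$\alpha$-favorable if $\alpha$ has a winning strategy in this game. *)

theory Defs
  imports "HOL-Analysis.Analysis"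
begin

definition tychonoff_space :: "'a topology \<Rightarrow> bool" where
  "tychonoff_space X \<longleftrightarrow> t1_space X \<and> completely_regular_space X"

definition pseudocompact :: "'a topology \<Rightarrow> bool" where
  "pseudocompact X \<longleftrightarrow> tychonoff_space X \<and>
     (\<forall>f. continuous_map X euclideanreal f \<longrightarrow> bounded (f ` topspace X))"

text \<open>A strategy for alpha maps the list [V_0,...,V_n] of beta's moves so far
  to alpha's answer U_n. (alpha's own earlier moves are determined by the
  strategy, so this loses no generality.)\<close>
definition alpha_resp :: "('a set list \<Rightarrow> 'a set) \<Rightarrow> (nat \<Rightarrow> 'a set) \<Rightarrow> nat \<Rightarrow> 'a set" where
  "alpha_resp \<sigma> V n = \<sigma> (map V [0..<Suc n])"

definition beta_legal_upto :: "'a topology \<Rightarrow> ('a set list \<Rightarrow> 'a set) \<Rightarrow> (nat \<Rightarrow> 'a set) \<Rightarrow> nat \<Rightarrow> bool" where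
  "beta_legal_upto X \<sigma> V n \<longleftrightarrow>
     (\<forall>k\<le>n. openin X (V k) \<and> V k \<noteq> {}) \<and>
     (\<forall>k<n. V (Suc k) \<subseteq> alpha_resp \<sigma> V k)"

definition alpha_wins_play :: "'a topology \<Rightarrow> (nat \<Rightarrow> 'a set) \<Rightarrow> bool" where
  "alpha_wins_play X U \<longleftrightarrow>
     (\<forall>a g. (\<forall>n. a n \<in> U n) \<longrightarrow> continuous_map X euclideanreal g \<longrightarrow>
        (\<exists>t \<in> (\<Inter>n. U n). g t \<in> closure (range (\<lambda>n. g (a n)))))"

definition winning_alpha_strategy_CX :: "'a topology \<Rightarrow> ('a set list \<Rightarrow> 'a set) \<Rightarrow> bool" where
  "winning_alpha_strategy_CX X \<sigma> \<longleftrightarrow>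
     (\<forall>V n. beta_legal_upto X \<sigma> V n \<longrightarrow>
        openin X (alpha_resp \<sigma> V n) \<and> alpha_resp \<sigma> V n \<noteq> {} \<and> alpha_resp \<sigma> V n \<subseteq> V n) \<and>
     (\<forall>V. (\<forall>n. beta_legal_upto X \<sigma> V n) \<longrightarrow> alpha_wins_play X (alpha_resp \<sigma> V))"

definition sigma_star_CX_alpha_favorable :: "'a topology \<Rightarrow> bool" where
  "sigma_star_CX_alpha_favorable X \<longleftrightarrow> (\<exists>\<sigma>. winning_alpha_strategy_CX X \<sigma>)"

end

theory Submission
  imports Defs
begin

lemma cluster_point:
  fixes X :: "'a topology" and Q :: "nat \<Rightarrow> 'a set"
  assumes cr: "completely_regular_space X"
    and bd: "\<forall>f. continuous_map X euclideanreal f \<longrightarrow> bounded (f ` topspace X)"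
    and Q: "\<And>k. openin X (Q k)" "\<And>k. Q k \<noteq> {}"
  shows "\<exists>t\<in>topspace X. \<forall>N. openin X N \<and> t \<in> N \<longrightarrow> (\<forall>m. \<exists>k\<ge>m. N \<inter> Q k \<noteq> {})"
proof (rule ccontr)
  assume "\<not> ?thesis"
  then have loc: "\<forall>x\<in>topspace X. \<exists>N m. openin X N \<and> x \<in> N \<and> (\<forall>k\<ge>m. N \<inter> Q k = {})"
    by (meson not_le)
  obtain Nx mx where Nx: "\<And>x. x \<in> topspace X \<Longrightarrow> openin X (Nx x) \<and> x \<in> Nx x \<and> (\<forall>k\<ge>mx x. Nx x \<inter> Q k = {})"
    using loc by metis
  have "\<forall>k. \<exists>x. x \<in> Q k" using Q(2) by blast
  then have "\<exists>xk. \<forall>k. xk k \<in> Q k" by (rule choice)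
  then obtain xk where xk: "\<And>k. xk k \<in> Q k" by blast
  have xkt: "xk k \<in> topspace X" for k using xk Q(1) openin_subset by blast
  have "\<exists>f::_\<Rightarrow>real. continuous_map X (top_of_set {0..1}) f \<and> f (xk k) = 0 \<and> f ` (topspace X - Q k) \<subseteq> {1}" for k
  proof -
    have "closedin X (topspace X - Q k) \<and> xk k \<in> topspace X - (topspace X - Q k)"
      using Q(1) xk xkt by blast
    from cr[unfolded completely_regular_space_def, rule_format, OF this] show ?thesis .
  qed
  then have "\<forall>k. \<exists>f::'a\<Rightarrow>real. continuous_map X (top_of_set {0..1}) f \<and> f (xk k) = 0 \<and> f ` (topspace X - Q k) \<subseteq> {1}" by blast
  then have "\<exists>f::nat\<Rightarrow>'a\<Rightarrow>real. \<forall>k. continuous_map X (top_of_set {0..1}) (f k) \<and> f k (xk k) = 0 \<and> f k ` (topspace X - Q k) \<subseteq> {1}" by (rule choice)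
  then obtain f :: "nat \<Rightarrow> 'a \<Rightarrow> real" where f: "\<And>k. continuous_map X (top_of_set {0..1}) (f k) \<and> f k (xk k) = 0 \<and> f k ` (topspace X - Q k) \<subseteq> {1}"
    by blast
  define h where "h k x = 1 - f k x" for k x
  have hc: "continuous_map X euclideanreal (h k)" for k
    unfolding h_def using f[of k]
    by (intro continuous_intros) (auto simp: continuous_map_in_subtopology)
  have hrange: "x \<in> topspace X \<Longrightarrow> 0 \<le> h k x" for k x
    using f[of k] unfolding h_def continuous_map_def by auto
  have hzero: "x \<in> topspace X \<Longrightarrow> x \<notin> Q k \<Longrightarrow> h k x = 0" for k x
    using f[of k] unfolding h_def by auto
  have hxk: "h k (xk k) = 1" for k using f[of k] unfolding h_def by auto
  define F where "F x = (\<Sum>k<mx x. real k * h k x)" for x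
  have sumeq: "(\<Sum>k<a. real k * h k y) = (\<Sum>k<b. real k * h k y)"
    if "\<forall>k\<ge>a. h k y = 0" "\<forall>k\<ge>b. h k y = 0" for a b y
  proof -
    have *: "(\<Sum>k<a. real k * h k y) = (\<Sum>k<max a b. real k * h k y)"
      if "\<forall>k\<ge>a. h k y = 0" for a b
    proof -
      have "(\<Sum>k<max a b. real k * h k y) = (\<Sum>k<a. real k * h k y) + (\<Sum>k\<in>{a..<max a b}. real k * h k y)"
        by (metis (no_types, lifting) lessThan_atLeast0 max.cobounded1 sum.atLeastLessThan_concat zero_le)
      also have "(\<Sum>k\<in>{a..<max a b}. real k * h k y) = 0" using that by (intro sum.neutral) auto
      finally show ?thesis by simp
    qed
    show ?thesis using *[of a b] *[of b a] that by (simp add: max.commute)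
  qed
  have vanish: "\<forall>k\<ge>mx x. h k y = 0" if "x \<in> topspace X" "y \<in> Nx x" for x y
    using Nx[OF that(1)] hzero that(2) openin_subset by blast
  have Floc: "F y = (\<Sum>k<mx x. real k * h k y)" if "x \<in> topspace X" "y \<in> Nx x" for x y
  proof -
    have yt: "y \<in> topspace X" using Nx[OF that(1)] that(2) openin_subset by blast
    show ?thesis unfolding F_def
      by (rule sumeq) (use vanish[OF yt Nx[OF yt, THEN conjunct2, THEN conjunct1]] vanish[OF that] in auto)
  qed
  have Fc: "continuous_map X euclideanreal F"
    unfolding continuous_map
  proof safe
    fix U :: "real set" assume U: "openin euclideanreal U"
    show "openin X {x \<in> topspace X. F x \<in> U}"
    proof (subst openin_subopen, safe)
      fix x assume x: "x \<in> topspace X" "F x \<in> U"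
      define G where "G y = (\<Sum>k<mx x. real k * h k y)" for y
      have Gc: "continuous_map X euclideanreal G" unfolding G_def
        by (intro continuous_intros hc) auto
      let ?T = "Nx x \<inter> {y \<in> topspace X. G y \<in> U}"
      have "openin X ?T" using Nx[OF x(1)] Gc U by (simp add: continuous_map openin_Int)
      moreover have "x \<in> ?T" using Nx[OF x(1)] x Floc[OF x(1)] G_def by auto
      moreover have "?T \<subseteq> {x \<in> topspace X. F x \<in> U}" using Floc[OF x(1)] G_def by auto
      ultimately show "\<exists>T. openin X T \<and> x \<in> T \<and> T \<subseteq> {x \<in> topspace X. F x \<in> U}" by blast
    qed
  qed simp
  then obtain B where B: "\<And>x. x \<in> topspace X \<Longrightarrow> \<bar>F x\<bar> \<le> B"
    using bd by (meson bounded_real image_eqI)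
  obtain k :: nat where k: "real k > B" using reals_Archimedean2 by blast
  have "k < mx (xk k)"
    using vanish[OF xkt Nx[OF xkt, THEN conjunct2, THEN conjunct1]] hxk by (metis not_le zero_neq_one)
  then have "real k * h k (xk k) \<le> F (xk k)" unfolding F_def
    by (intro member_le_sum) (auto intro: mult_nonneg_nonneg hrange[OF xkt])
  moreover have "\<bar>F (xk k)\<bar> \<le> B" using B[OF xkt] .
  ultimately show False using k hxk[of k] by simp
qed

lemma reg_shrink:
  assumes "regular_space X" "openin X V" "V \<noteq> {}"
  shows "\<exists>U. openin X U \<and> U \<noteq> {} \<and> X closure_of U \<subseteq> V"
proof -
  obtain x where x: "x \<in> V" using assms(3) by auto
  have nb: "neighbourhood_base_of (closedin X) X"
    using assms(1) by (simp only: neighbourhood_base_of_closedin)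
  have "\<exists>U C. openin X U \<and> closedin X C \<and> x \<in> U \<and> U \<subseteq> C \<and> C \<subseteq> V"
    using nb[unfolded neighbourhood_base_of, rule_format, of V x] assms(2) x by simp
  then obtain U C where U: "openin X U" "closedin X C" "x \<in> U" "U \<subseteq> C" "C \<subseteq> V"
    by blast
  have "X closure_of U \<subseteq> C" by (rule closure_of_minimal[OF U(4) U(2)])
  then have "X closure_of U \<subseteq> V" using U(5) by (rule subset_trans)
  moreover have "U \<noteq> {}" using U(3) by auto
  ultimately show ?thesis using U(1) by blast
qed

theorem corollary5p2:
  fixes X :: "'a topology"
  assumes "pseudocompact X"
  shows "sigma_star_CX_alpha_favorable X"
proof -
  have cr: "completely_regular_space X" and bd: "\<forall>f. continuous_map X euclideanreal f \<longrightarrow> bounded (f ` topspace X)"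
    using assms unfolding pseudocompact_def tychonoff_space_def by auto
  have rg: "regular_space X" using cr by (rule completely_regular_imp_regular_space)
  define \<sigma> where "\<sigma> L = (SOME U. openin X U \<and> U \<noteq> {} \<and> X closure_of U \<subseteq> last L)" for L :: "'a set list"
  have resp: "alpha_resp \<sigma> V n = (SOME U. openin X U \<and> U \<noteq> {} \<and> X closure_of U \<subseteq> V n)" for V n
    unfolding alpha_resp_def \<sigma>_def by simp
  have good: "openin X (alpha_resp \<sigma> V n) \<and> alpha_resp \<sigma> V n \<noteq> {} \<and> X closure_of (alpha_resp \<sigma> V n) \<subseteq> V n"
    if "openin X (V n)" "V n \<noteq> {}" for V n
    unfolding resp by (rule someI_ex) (rule reg_shrink[OF rg that])
  have sub: "alpha_resp \<sigma> V n \<subseteq> V n" if "openin X (V n)" "V n \<noteq> {}" for V n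
  proof -
    have g: "openin X (alpha_resp \<sigma> V n)" "X closure_of (alpha_resp \<sigma> V n) \<subseteq> V n"
      using good[of V n, OF that] by simp_all
    have "alpha_resp \<sigma> V n \<subseteq> X closure_of (alpha_resp \<sigma> V n)"
      by (rule closure_of_subset[OF openin_subset[OF g(1)]])
    then show ?thesis using g(2) by (rule subset_trans)
  qed
  have "winning_alpha_strategy_CX X \<sigma>"
    unfolding winning_alpha_strategy_CX_def
  proof (rule conjI)
    show "\<forall>V n. beta_legal_upto X \<sigma> V n \<longrightarrow>
        openin X (alpha_resp \<sigma> V n) \<and> alpha_resp \<sigma> V n \<noteq> {} \<and> alpha_resp \<sigma> V n \<subseteq> V n"
    proof (intro allI impI)
    fix V n assume "beta_legal_upto X \<sigma> V n"
    then have "openin X (V n)" "V n \<noteq> {}" unfolding beta_legal_upto_def by auto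
    then show "openin X (alpha_resp \<sigma> V n) \<and> alpha_resp \<sigma> V n \<noteq> {} \<and> alpha_resp \<sigma> V n \<subseteq> V n"
      using good[of V n] sub[of V n] by simp
    qed
  next
    show "\<forall>V. (\<forall>n. beta_legal_upto X \<sigma> V n) \<longrightarrow> alpha_wins_play X (alpha_resp \<sigma> V)"
    proof (intro allI impI)
    fix V assume leg: "\<forall>n. beta_legal_upto X \<sigma> V n"
    define U where "U = alpha_resp \<sigma> V"
    have Vo: "openin X (V n) \<and> V n \<noteq> {}" for n using leg[rule_format, of n] unfolding beta_legal_upto_def by simp
    have Ug: "openin X (U n) \<and> U n \<noteq> {} \<and> X closure_of (U n) \<subseteq> V n" for n
      unfolding U_def using good[of V n] Vo[of n] by simp
    have VU: "V (Suc n) \<subseteq> U n" for n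
      using leg[rule_format, of "Suc n"] unfolding beta_legal_upto_def U_def by simp
    have UV: "U n \<subseteq> V n" for n unfolding U_def using sub[of V n] Vo[of n] by simp
    have Udec: "U (Suc n) \<subseteq> U n" for n using UV[of "Suc n"] VU[of n] by (rule subset_trans)
    have Umono: "m \<le> n \<Longrightarrow> U n \<subseteq> U m" for m n
      using Udec by (rule lift_Suc_antimono_le)
    have Ut: "U n \<subseteq> topspace X" for n using Ug[of n] by (simp add: openin_subset)
    show "alpha_wins_play X (alpha_resp \<sigma> V)"
      unfolding alpha_wins_play_def U_def[symmetric]
    proof (intro allI impI)
      fix a g assume a: "\<forall>n. a n \<in> U n" and gc: "continuous_map X euclideanreal g"
      have at: "a n \<in> topspace X" for n using a Ut by blast
      have "bounded (range (g \<circ> a))"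
      proof (rule bounded_subset)
        show "bounded (g ` topspace X)" using bd gc by blast
        show "range (g \<circ> a) \<subseteq> g ` topspace X" using at by auto
      qed
      then obtain l r where r: "strict_mono r" and lim: "((g \<circ> a) \<circ> r) \<longlonglongrightarrow> l"
        using bounded_imp_convergent_subsequence by blast
      define e where "e k = \<bar>g (a (r k)) - l\<bar> + inverse (real (Suc k))" for k
      define Q where "Q k = U (r k) \<inter> {x \<in> topspace X. g x \<in> ball l (e k)}" for k
      have Qo: "openin X (Q k)" for k
        unfolding Q_def using Ug[of "r k"] openin_continuous_map_preimage[OF gc, of "ball l (e k)"]
        by (intro openin_Int) auto
      have aQ: "a (r k) \<in> Q k" for k
        unfolding Q_def e_def using a at by (auto simp: dist_real_def abs_minus_commute)
      have Qne: "Q k \<noteq> {}" for k using aQ[of k] by auto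
      obtain t where t: "t \<in> topspace X"
        and clu0: "\<forall>N. openin X N \<and> t \<in> N \<longrightarrow> (\<forall>m. \<exists>k\<ge>m. N \<inter> Q k \<noteq> {})"
        using cluster_point[of X Q, OF cr bd Qo Qne] by (elim bexE)
      have clu: "\<exists>k\<ge>m. N \<inter> Q k \<noteq> {}" if "openin X N" "t \<in> N" for N m
        using clu0 that by simp
      have tU: "t \<in> U n" for n
      proof -
        have "t \<in> X closure_of U (Suc n)"
          unfolding in_closure_of
        proof (intro conjI allI impI t)
          fix T assume T: "t \<in> T \<and> openin X T"
          then obtain k where k: "k \<ge> Suc n" "T \<inter> Q k \<noteq> {}" using clu[of T "Suc n"] by blast
          have "r k \<ge> k" using r by (simp add: seq_suble)
          then have "U (r k) \<subseteq> U (Suc n)" using Umono k(1) by simp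
          moreover have "Q k \<subseteq> U (r k)" unfolding Q_def by blast
          ultimately show "\<exists>y. y \<in> U (Suc n) \<and> y \<in> T" using k(2) by blast
        qed
        then show ?thesis using Ug[of "Suc n"] VU[of n] by blast
      qed
      have e0: "e \<longlonglongrightarrow> 0"
      proof -
        have "(\<lambda>k. g (a (r k)) - l) \<longlonglongrightarrow> 0" using lim by (simp add: LIM_zero o_def)
        then have "(\<lambda>k. \<bar>g (a (r k)) - l\<bar>) \<longlonglongrightarrow> 0" by (rule tendsto_rabs_zero)
        then show ?thesis unfolding e_def by (rule tendsto_add_zero[OF _ LIMSEQ_inverse_real_of_nat])
      qed
      have gt: "g t = l"
      proof (rule ccontr)
        assume ne: "g t \<noteq> l"
        define \<epsilon> where "\<epsilon> = \<bar>g t - l\<bar>"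
        have ep: "\<epsilon> > 0" using ne \<epsilon>_def by simp
        have "\<forall>\<^sub>F k in sequentially. e k < \<epsilon>/2"
          using order_tendstoD(2)[OF e0, of "\<epsilon>/2"] ep by simp
        then have "\<exists>M. \<forall>k\<ge>M. e k < \<epsilon>/2" by (simp only: eventually_sequentially)
        then obtain M where M: "\<And>k. k \<ge> M \<Longrightarrow> e k < \<epsilon>/2" by blast
        define T where "T = {x \<in> topspace X. g x \<in> ball (g t) (\<epsilon>/2)}"
        have "openin X T" unfolding T_def using openin_continuous_map_preimage[OF gc, of "ball (g t) (\<epsilon>/2)"] by simp
        moreover have "t \<in> T" unfolding T_def using t ep by simp
        ultimately obtain k where k: "k \<ge> M" "T \<inter> Q k \<noteq> {}" using clu[of T M] by blast
        then obtain y where y: "y \<in> T" "y \<in> Q k" by blast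
        have A: "dist (g t) (g y) < \<epsilon>/2" using y(1) unfolding T_def by simp
        have B0: "dist l (g y) < e k" using y(2) unfolding Q_def by simp
        have B: "dist (g y) l < \<epsilon>/2"
          unfolding dist_commute[of "g y" l] by (rule less_trans[OF B0 M[OF k(1)]])
        have "dist (g t) l \<le> dist (g t) (g y) + dist (g y) l" by (rule dist_triangle)
        also have "\<dots> < \<epsilon>/2 + \<epsilon>/2" by (rule add_strict_mono[OF A B])
        also have "\<epsilon>/2 + \<epsilon>/2 = \<epsilon>" by simp
        finally have "dist (g t) l < \<epsilon>" .
        then show False unfolding \<epsilon>_def dist_real_def by simp
      qed
      have "l \<in> closure (range (\<lambda>n. g (a n)))"
        unfolding closure_sequential
        apply (rule exI[of _ "(g \<circ> a) \<circ> r"])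
        using lim by simp
      moreover have "t \<in> (\<Inter>n. U n)" using tU by simp
      ultimately show "\<exists>t \<in> (\<Inter>n. U n). g t \<in> closure (range (\<lambda>n. g (a n)))"
        using gt by (intro bexI[of _ t]) simp_all
    qed
    qed
  qed
  then show ?thesis unfolding sigma_star_CX_alpha_favorable_def by (rule exI[where P="winning_alpha_strategy_CX X"])
qed

end
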